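(* Let $(p_m)$ and $(q_n)$ belong to $SVA_{reg(\alpha)}$ (for some $\alpha\ge0$), and let $(u_{mn})$ be a double sequence of complex numbers that is $(\overline{N},p,q)$ summable to a number $\ell$. If $$\frac{P_m}{p_m}\Delta_{10}u_{mn}=O(1)\quad\text{and}\quad\frac{Q_n}{q_n}\Delta_{01}u_{mn}=O(1),$$ then $(u_{mn})$ is $P$-convergent to $\ell$.
   Context: Weights: $(p_m)_{m\ge0},(q_n)_{n\ge0}$ are sequences of positive reals with $P_m=\sum_{i=0}^m p_i\to\infty$ and $Q_n=\sum_{j=0}^n q_j\to\infty$. $SVA_{reg(\alpha)}$ denotes the set of positive sequences $(p_m)$ whose partial sums have the form $P_m=(m+1)^{\alpha}L(m)$ ($m\ge0$) with a constant $\alpha\ge0$ and a slowly varying function $L$ on $(0,\infty)$, i.e. $L$ positive, measurable, and $L(\lambda t)/L(t)\to1$ as $t\to\infty$ for every $\lambda>0$. The weighted means are $\sigma_{mn}=\frac{1}{P_mQ_n}\sum_{i=0}^m\sum_{j=0}^n p_iq_ju_{ij}$; $(u_{mn})$ is $(\overline{N},p,q)$ summable to $\ell$ if $(\sigma_{mn})$ is $P$-convergent to $\ell$. A double sequence $(a_{mn})$ is $P$-convergent to $\ell$ if for every $\epsilon>0$ there is $n_0$ with $|a_{mn}-\ell|<\epsilon$ whenever $m,n\ge n_0$. $\Delta_{10}u_{mn}=u_{mn}-u_{m-1,n}$ and $\Delta_{01}u_{mn}=u_{mn}-u_{m,n-1}$. For a double array, $a_{mn}=O(1)$ means there exist constants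 $H>0$ and $n_0$ such that $|a_{mn}|\le H$ for all $m,n\ge n_0$. *)

theory Defs
  imports "HOL-Analysis.Analysis"
begin

definition psum :: "(nat \<Rightarrow> real) \<Rightarrow> nat \<Rightarrow> real" where
  "psum p m = (\<Sum>i\<le>m. p i)"

definition slowly_varying :: "(real \<Rightarrow> real) \<Rightarrow> bool" where
  "slowly_varying L \<longleftrightarrow>
     (\<forall>t>0. L t > 0) \<and>
     L \<in> borel_measurable (restrict_space borel {0<..}) \<and>
     (\<forall>c>0. ((\<lambda>t. L (c * t) / L t) \<longlongrightarrow> 1) at_top)"

definition weight_seq :: "(nat \<Rightarrow> real) \<Rightarrow> bool" where
  "weight_seq p \<longleftrightarrow> (\<forall>m. p m > 0) \<and> filterlim (psum p) at_top sequentially"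

definition SVA_reg :: "real \<Rightarrow> (nat \<Rightarrow> real) set" where
  "SVA_reg \<alpha> = {p. (\<forall>m. p m > 0) \<and>
     (\<exists>L. slowly_varying L \<and> (\<forall>m. psum p m = (real m + 1) powr \<alpha> * L (real m)))}"

definition wmean :: "(nat \<Rightarrow> real) \<Rightarrow> (nat \<Rightarrow> real) \<Rightarrow> (nat \<Rightarrow> nat \<Rightarrow> complex) \<Rightarrow> nat \<Rightarrow> nat \<Rightarrow> complex" where
  "wmean p q u m n = (\<Sum>i\<le>m. \<Sum>j\<le>n. of_real (p i * q j) * u i j) / of_real (psum p m * psum q n)"

definition P_conv :: "(nat \<Rightarrow> nat \<Rightarrow> complex) \<Rightarrow> complex \<Rightarrow> bool" where
  "P_conv a l \<longleftrightarrow> (\<forall>\<epsilon>>0. \<exists>n0. \<forall>m n. m \<ge> n0 \<and> n \<ge> n0 \<longrightarrow> norm (a m n - l) < \<epsilon>)"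

definition Nbar_summable :: "(nat \<Rightarrow> real) \<Rightarrow> (nat \<Rightarrow> real) \<Rightarrow> (nat \<Rightarrow> nat \<Rightarrow> complex) \<Rightarrow> complex \<Rightarrow> bool" where
  "Nbar_summable p q u l \<longleftrightarrow> P_conv (wmean p q u) l"

definition double_bigO1 :: "(nat \<Rightarrow> nat \<Rightarrow> complex) \<Rightarrow> bool" where
  "double_bigO1 a \<longleftrightarrow> (\<exists>H>0. \<exists>n0. \<forall>m n. m \<ge> n0 \<and> n \<ge> n0 \<longrightarrow> norm (a m n) \<le> H)"

definition Delta10 :: "(nat \<Rightarrow> nat \<Rightarrow> complex) \<Rightarrow> nat \<Rightarrow> nat \<Rightarrow> complex" where
  "Delta10 u m n = u m n - (if m = 0 then 0 else u (m - 1) n)"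

definition Delta01 :: "(nat \<Rightarrow> nat \<Rightarrow> complex) \<Rightarrow> nat \<Rightarrow> nat \<Rightarrow> complex" where
  "Delta01 u m n = u m n - (if n = 0 then 0 else u m (n - 1))"

end

theory Submission imports Defs begin

lemma psum_pos: "(\<forall>i. p i > 0) \<Longrightarrow> psum p m > 0"
  unfolding psum_def by (rule sum_pos) auto

lemma psum_Suc: "psum p (Suc m) = psum p m + p (Suc m)"
  by (simp add: psum_def)

lemma psum_strict: assumes "\<forall>i. p i > 0" shows "strict_mono (psum p)"
  unfolding strict_mono_Suc_iff using assms by (simp add: psum_Suc)

lemma psum_mono: assumes "\<forall>i. p i > 0" "a \<le> b" shows "psum p a \<le> psum p b"
  using psum_strict[OF assms(1)] assms(2) by (metis strict_mono_less_eq)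

lemma sum_gt: fixes f :: "nat \<Rightarrow> 'a::ab_group_add"
  assumes "k \<le> m" shows "(\<Sum>i\<in>{k<..m}. f i) = (\<Sum>i\<le>m. f i) - (\<Sum>i\<le>k. f i)"
proof -
  have "{..m} = {..k} \<union> {k<..m}" using assms by auto
  then have "(\<Sum>i\<le>m. f i) = sum f ({..k} \<union> {k<..m})" by simp
  also have "\<dots> = (\<Sum>i\<le>k. f i) + (\<Sum>i\<in>{k<..m}. f i)"
    by (rule sum.union_disjoint) auto
  finally have "(\<Sum>i\<le>m. f i) = (\<Sum>i\<le>k. f i) + (\<Sum>i\<in>{k<..m}. f i)" .
  then show ?thesis by simp
qed

lemma rect: fixes g :: "nat \<Rightarrow> nat \<Rightarrow> 'a::ab_group_add"
  assumes "k \<le> m" "k' \<le> n"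
  shows "(\<Sum>i\<in>{k<..m}. \<Sum>j\<in>{k'<..n}. g i j) = (\<Sum>i\<le>m. \<Sum>j\<le>n. g i j) - (\<Sum>i\<le>k. \<Sum>j\<le>n. g i j) - (\<Sum>i\<le>m. \<Sum>j\<le>k'. g i j) + (\<Sum>i\<le>k. \<Sum>j\<le>k'. g i j)"
  using assms by (simp add: sum_gt sum_subtractf algebra_simps)

lemma telescope: fixes f :: "nat \<Rightarrow> 'a::ab_group_add"
  shows "i \<le> m \<Longrightarrow> f m - f i = (\<Sum>s\<in>{i<..m}. f s - f (s - 1))"
proof (induction m)
  case 0 then have "i = 0" by simp
  then show ?case by simp
next
  case (Suc m)
  show ?case
  proof (cases "i = Suc m")
    case True
    have "{i<..Suc m} = {}" using True by auto
    then show ?thesis using True by simp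
  next
    case False
    then have im: "i \<le> m" using Suc.prems by simp
    have "{i<..Suc m} = insert (Suc m) {i<..m}" using im by auto
    then have "(\<Sum>s\<in>{i<..Suc m}. f s - f (s - 1)) = (f (Suc m) - f m) + (\<Sum>s\<in>{i<..m}. f s - f (s - 1))"
      by simp
    then show ?thesis using Suc.IH[OF im] by (simp add: algebra_simps)
  qed
qed

lemma osc:
  fixes f :: "nat \<Rightarrow> complex"
  assumes pos: "\<forall>s. p s > 0" and im: "i \<le> m" and H: "H \<ge> 0"
    and bnd: "\<And>s. i < s \<Longrightarrow> s \<le> m \<Longrightarrow> norm (f s - f (s - 1)) \<le> H * p s / psum p s"
  shows "norm (f m - f i) \<le> H * (psum p m - psum p i) / psum p i"
proof -
  have "norm (f m - f i) = norm (\<Sum>s\<in>{i<..m}. f s - f (s - 1))" by (subst telescope[OF im, of f]) (rule refl)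
  also have "\<dots> \<le> (\<Sum>s\<in>{i<..m}. norm (f s - f (s - 1)))" by (rule norm_sum)
  also have "\<dots> \<le> (\<Sum>s\<in>{i<..m}. H * p s / psum p i)"
  proof (rule sum_mono)
    fix s assume s: "s \<in> {i<..m}"
    have "H * p s / psum p s \<le> H * p s / psum p i"
    proof (rule divide_left_mono)
      show "psum p i \<le> psum p s" using psum_mono[OF pos, of i s] s by auto
      show "0 \<le> H * p s" using H pos by (simp add: less_imp_le)
      show "0 < psum p s * psum p i" using psum_pos[OF pos] by simp
    qed
    then show "norm (f s - f (s - 1)) \<le> H * p s / psum p i" using bnd s by force
  qed
  also have "\<dots> = H * (\<Sum>s\<in>{i<..m}. p s) / psum p i"
    by (simp add: sum_divide_distrib[symmetric] sum_distrib_left)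
  also have "(\<Sum>s\<in>{i<..m}. p s) = psum p m - psum p i"
    using sum_gt[OF im] by (simp add: psum_def)
  finally show ?thesis .
qed

lemma choose_k:
  assumes pos: "\<forall>s. p s > 0" and lam: "lam > 1" and N: "lam * psum p N \<le> psum p m"
  shows "\<exists>k. N \<le> k \<and> k < m \<and> lam * psum p k \<le> psum p m \<and> psum p m < lam * psum p (Suc k)"
proof -
  define S where "S = {k. N \<le> k \<and> lam * psum p k \<le> psum p m}"
  have sub: "S \<subseteq> {..<m}"
  proof
    fix k assume "k \<in> S"
    then have "lam * psum p k \<le> psum p m" by (simp add: S_def)
    moreover have "psum p k > 0" using psum_pos[OF pos] by blast
    ultimately have "psum p k < psum p m" using lam
      by (smt (verit) mult_less_cancel_right1)
    then show "k \<in> {..<m}" using psum_mono[OF pos, of m k] by (cases "m \<le> k") auto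
  qed
  have fin: "finite S" using sub finite_subset by blast
  have NS: "N \<in> S" using N by (simp add: S_def)
  define k where "k = Max S"
  have kS: "k \<in> S" using fin NS k_def Max_in by blast
  have "Suc k \<notin> S" using Max_ge[OF fin] k_def by fastforce
  then have "psum p m < lam * psum p (Suc k)" using kS by (auto simp: S_def)
  then show ?thesis using kS sub by (auto simp: S_def intro!: exI[of _ k])
qed

lemma Dlemma:
  assumes "\<forall>i. p i > 0" "\<forall>j. q j > 0"
  shows "(\<Sum>i\<le>a. \<Sum>j\<le>b. of_real (p i * q j) * (u i j - l)) = of_real (psum p a * psum q b) * (wmean p q u a b - l)"
proof -
  have nz: "psum p a * psum q b \<noteq> 0" using psum_pos assms by (metis mult_pos_pos less_irrefl)
  have pq: "psum p a * psum q b = (\<Sum>i\<le>a. \<Sum>j\<le>b. p i * q j)"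
    by (simp add: psum_def sum_product)
  have "(\<Sum>i\<le>a. \<Sum>j\<le>b. of_real (p i * q j) * (u i j - l)) =
        (\<Sum>i\<le>a. \<Sum>j\<le>b. of_real (p i * q j) * u i j) - (\<Sum>i\<le>a. \<Sum>j\<le>b. of_real (p i * q j)) * l"
    by (simp add: algebra_simps sum_subtractf sum_distrib_right sum_distrib_left)
  also have "(\<Sum>i\<le>a. \<Sum>j\<le>b. of_real (p i * q j)) = (of_real (psum p a * psum q b) :: complex)"
    by (simp add: pq of_real_sum)
  finally show ?thesis using nz by (simp add: wmean_def algebra_simps)
qed


theorem theorem5p2:
  fixes p q :: "nat \<Rightarrow> real" and u :: "nat \<Rightarrow> nat \<Rightarrow> complex" and l :: complex and \<alpha> :: real
  assumes "\<alpha> \<ge> 0"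
    and "weight_seq p" and "weight_seq q"
    and "p \<in> SVA_reg \<alpha>" and "q \<in> SVA_reg \<alpha>"
    and "Nbar_summable p q u l"
    and "double_bigO1 (\<lambda>m n. of_real (psum p m / p m) * Delta10 u m n)"
    and "double_bigO1 (\<lambda>m n. of_real (psum q n / q n) * Delta01 u m n)"
  shows "P_conv u l"
proof -
  define P where "P = psum p"
  define Q where "Q = psum q"
  have ppos: "\<forall>i. p i > 0" and Plim: "filterlim P at_top sequentially"
    using assms(2) by (auto simp: weight_seq_def P_def)
  have qpos: "\<forall>i. q i > 0" and Qlim: "filterlim Q at_top sequentially"
    using assms(3) by (auto simp: weight_seq_def Q_def)
  have Ppos: "\<And>a. P a > 0" using psum_pos[OF ppos] by (simp add: P_def)
  have Qpos: "\<And>a. Q a > 0" using psum_pos[OF qpos] by (simp add: Q_def)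
  have Pmono: "\<And>a b. a \<le> b \<Longrightarrow> P a \<le> P b" using psum_mono[OF ppos] by (simp add: P_def)
  have Qmono: "\<And>a b. a \<le> b \<Longrightarrow> Q a \<le> Q b" using psum_mono[OF qpos] by (simp add: Q_def)
  obtain H1 n1 where H1: "H1 > 0" and H1b: "\<And>m n. m \<ge> n1 \<Longrightarrow> n \<ge> n1 \<Longrightarrow> norm (of_real (P m / p m) * Delta10 u m n) \<le> H1"
    using assms(7) unfolding double_bigO1_def P_def by blast
  obtain H2 n2 where H2: "H2 > 0" and H2b: "\<And>m n. m \<ge> n2 \<Longrightarrow> n \<ge> n2 \<Longrightarrow> norm (of_real (Q n / q n) * Delta01 u m n) \<le> H2"
    using assms(8) unfolding double_bigO1_def Q_def by blast
  have D10: "norm (u s j - u (s - 1) j) \<le> H1 * p s / P s" if "s \<ge> n1" "s \<ge> 1" "j \<ge> n1" for s j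
  proof -
    have "norm (of_real (P s / p s) * Delta10 u s j) = (P s / p s) * norm (u s j - u (s - 1) j)"
    proof -
      have "Delta10 u s j = u s j - u (s - 1) j" using that by (simp add: Delta10_def)
      moreover have "\<bar>P s / p s\<bar> = P s / p s" using Ppos[of s] ppos by (simp add: abs_of_pos)
      ultimately show ?thesis by (simp only: norm_mult norm_of_real)
    qed
    then have "(P s / p s) * norm (u s j - u (s - 1) j) \<le> H1" using H1b that by metis
    then show ?thesis using Ppos[of s] ppos by (simp add: field_simps)
  qed
  have D01: "norm (u m t - u m (t - 1)) \<le> H2 * q t / Q t" if "t \<ge> n2" "t \<ge> 1" "m \<ge> n2" for m t
  proof -
    have "norm (of_real (Q t / q t) * Delta01 u m t) = (Q t / q t) * norm (u m t - u m (t - 1))"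
    proof -
      have "Delta01 u m t = u m t - u m (t - 1)" using that by (simp add: Delta01_def)
      moreover have "\<bar>Q t / q t\<bar> = Q t / q t" using Qpos[of t] qpos by (simp add: abs_of_pos)
      ultimately show ?thesis by (simp only: norm_mult norm_of_real)
    qed
    then have "(Q t / q t) * norm (u m t - u m (t - 1)) \<le> H2" using H2b that by metis
    then show ?thesis using Qpos[of t] qpos by (simp add: field_simps)
  qed
  show ?thesis unfolding P_conv_def
  proof (intro allI impI)
    fix e :: real assume e: "e > 0"
    define \<delta> where "\<delta> = e / (4 * (H1 + H2))"
    have dpos: "\<delta> > 0" using e H1 H2 by (simp add: \<delta>_def)
    have dH: "(H1 + H2) * \<delta> = e / 4" using H1 H2 by (simp add: \<delta>_def field_simps)
    define r where "r = (2 + \<delta>) / \<delta>"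
    have rpos: "r > 0" using dpos by (simp add: r_def)
    define \<epsilon> where "\<epsilon> = e / (4 * (r * r))"
    have epos: "\<epsilon> > 0" using e rpos by (simp add: \<epsilon>_def)
    have erc: "\<epsilon> * (r * r) = e / 4" using rpos by (simp add: \<epsilon>_def)
    obtain N where N: "\<And>m n. N \<le> m \<Longrightarrow> N \<le> n \<Longrightarrow> norm (wmean p q u m n - l) < \<epsilon>"
      using assms(6) epos unfolding Nbar_summable_def P_conv_def by blast
    define N' where "N' = max N (max n1 (max n2 1))"
    have "eventually (\<lambda>m. (1 + \<delta>) * P N' \<le> P m) sequentially"
      using Plim unfolding filterlim_at_top by blast
    then obtain M1 where M1: "\<And>m. m \<ge> M1 \<Longrightarrow> (1 + \<delta>) * P N' \<le> P m"
      unfolding eventually_sequentially by blast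
    have "eventually (\<lambda>m. (1 + \<delta>) * Q N' \<le> Q m) sequentially"
      using Qlim unfolding filterlim_at_top by blast
    then obtain M2 where M2: "\<And>m. m \<ge> M2 \<Longrightarrow> (1 + \<delta>) * Q N' \<le> Q m"
      unfolding eventually_sequentially by blast
    show "\<exists>n0. \<forall>m n. n0 \<le> m \<and> n0 \<le> n \<longrightarrow> norm (u m n - l) < e"
    proof (intro exI allI impI)
      fix m n assume mn: "max M1 M2 \<le> m \<and> max M1 M2 \<le> n"
      obtain k where k: "N' \<le> k" "k < m" "(1 + \<delta>) * P k \<le> P m" "P m < (1 + \<delta>) * P (Suc k)"
        using choose_k[OF ppos, of "1 + \<delta>" N' m] M1 mn dpos by (auto simp: P_def)
      obtain k' where k': "N' \<le> k'" "k' < n" "(1 + \<delta>) * Q k' \<le> Q n" "Q n < (1 + \<delta>) * Q (Suc k')"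
        using choose_k[OF qpos, of "1 + \<delta>" N' n] M2 mn dpos by (auto simp: Q_def)
      define I where "I = {k<..m}"
      define J where "J = {k'<..n}"
      define A where "A = (P m - P k) * (Q n - Q k')"
      have Pmk: "P m - P k > 0"
      proof -
        have "\<delta> * P k > 0" using Ppos[of k] dpos by simp
        then show ?thesis using k(3) by (simp add: algebra_simps)
      qed
      have Qnk: "Q n - Q k' > 0"
      proof -
        have "\<delta> * Q k' > 0" using Qpos[of k'] dpos by simp
        then show ?thesis using k'(3) by (simp add: algebra_simps)
      qed
      have Apos: "A > 0" using Pmk Qnk by (simp add: A_def)
      have sumpq: "(\<Sum>i\<in>I. \<Sum>j\<in>J. p i * q j) = A"
      proof -
        have "(\<Sum>i\<in>I. \<Sum>j\<in>J. p i * q j) = (\<Sum>i\<in>I. p i) * (\<Sum>j\<in>J. q j)"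
          by (simp add: sum_product)
        also have "(\<Sum>i\<in>I. p i) = P m - P k" using sum_gt[of k m p] k(2) by (simp add: I_def P_def psum_def)
        also have "(\<Sum>j\<in>J. q j) = Q n - Q k'" using sum_gt[of k' n q] k'(2) by (simp add: J_def Q_def psum_def)
        finally show ?thesis by (simp add: A_def)
      qed
      define S1 where "S1 = (\<Sum>i\<in>I. \<Sum>j\<in>J. of_real (p i * q j) * (u m n - u i j))"
      define S2 where "S2 = (\<Sum>i\<in>I. \<Sum>j\<in>J. of_real (p i * q j) * (u i j - l))"
      have split: "of_real A * (u m n - l) = S1 + S2"
      proof -
        have "S1 + S2 = (\<Sum>i\<in>I. \<Sum>j\<in>J. of_real (p i * q j) * (u m n - l))"
          unfolding S1_def S2_def sum.distrib[symmetric] by (simp add: algebra_simps)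
        also have "\<dots> = of_real (\<Sum>i\<in>I. \<Sum>j\<in>J. p i * q j) * (u m n - l)"
          by (simp add: sum_distrib_right)
        finally show ?thesis using sumpq by simp
      qed
      define D where "D a b = (\<Sum>i\<le>a. \<Sum>j\<le>b. of_real (p i * q j) * (u i j - l))" for a b
      have Dbound: "norm (D a b) \<le> \<epsilon> * (P a * Q b)" if "a \<ge> N" "b \<ge> N" for a b
      proof -
        have "D a b = of_real (P a * Q b) * (wmean p q u a b - l)"
          unfolding D_def P_def Q_def by (rule Dlemma[OF ppos qpos])
        then have "norm (D a b) = (P a * Q b) * norm (wmean p q u a b - l)"
          using Ppos[of a] Qpos[of b] by (simp add: norm_mult)
        also have "\<dots> \<le> (P a * Q b) * \<epsilon>"
          using N[OF that] Ppos[of a] Qpos[of b] by (intro mult_left_mono) auto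
        finally show ?thesis by (simp add: mult.commute)
      qed
      have S2eq: "S2 = D m n - D k n - D m k' + D k k'"
        unfolding S2_def D_def I_def J_def using k(2) k'(2) by (intro rect) auto
      have NN: "N \<le> k" "N \<le> k'" "k \<le> m" "k' \<le> n" using k k' by (auto simp: N'_def)
      have S2b: "norm S2 \<le> \<epsilon> * ((P m + P k) * (Q n + Q k'))"
      proof -
        have "norm S2 \<le> norm (D m n - D k n - D m k') + norm (D k k')"
          unfolding S2eq by (rule norm_triangle_ineq)
        also have "norm (D m n - D k n - D m k') \<le> norm (D m n - D k n) + norm (D m k')"
          by (rule norm_triangle_ineq4)
        also have "norm (D m n - D k n) \<le> norm (D m n) + norm (D k n)"
          by (rule norm_triangle_ineq4)
        finally have "norm S2 \<le> norm (D m n) + norm (D k n) + norm (D m k') + norm (D k k')"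
          by simp
        also have "\<dots> \<le> \<epsilon> * (P m * Q n) + \<epsilon> * (P k * Q n) + \<epsilon> * (P m * Q k') + \<epsilon> * (P k * Q k')"
          using Dbound NN by (intro add_mono) auto
        finally show ?thesis by (simp add: algebra_simps)
      qed
      have rP: "P m + P k \<le> r * (P m - P k)"
      proof -
        have "\<delta> * (P m + P k) \<le> (2 + \<delta>) * (P m - P k)"
          using k(3) unfolding ring_distribs by linarith
        then have "P m + P k \<le> (2 + \<delta>) * (P m - P k) / \<delta>"
          using dpos by (simp add: le_divide_eq mult.commute)
        then show ?thesis by (simp add: r_def)
      qed
      have rQ: "Q n + Q k' \<le> r * (Q n - Q k')"
      proof -
        have "\<delta> * (Q n + Q k') \<le> (2 + \<delta>) * (Q n - Q k')"
          using k'(3) unfolding ring_distribs by linarith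
        then have "Q n + Q k' \<le> (2 + \<delta>) * (Q n - Q k') / \<delta>"
          using dpos by (simp add: le_divide_eq mult.commute)
        then show ?thesis by (simp add: r_def)
      qed
      have PQr: "(P m + P k) * (Q n + Q k') \<le> (r * r) * A"
      proof -
        have "(P m + P k) * (Q n + Q k') \<le> (r * (P m - P k)) * (r * (Q n - Q k'))"
          using rP rQ Ppos[of m] Ppos[of k] Qpos[of n] Qpos[of k'] by (intro mult_mono) auto
        then show ?thesis by (simp add: A_def algebra_simps)
      qed
      have pt: "norm (u m n - u i j) \<le> (H1 + H2) * \<delta>" if ij: "i \<in> I" "j \<in> J" for i j
      proof -
        have i: "k < i" "i \<le> m" and j: "k' < j" "j \<le> n" using ij by (auto simp: I_def J_def)
        have a: "norm (u m j - u i j) \<le> H1 * (P m - P i) / P i"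
          unfolding P_def
        proof (rule osc[OF ppos i(2) less_imp_le[OF H1], of "\<lambda>s. u s j"])
          fix s assume "i < s" "s \<le> m"
          then show "norm (u s j - u (s - 1) j) \<le> H1 * p s / psum p s"
            using D10[of s j] i j k(1) k'(1) by (auto simp: N'_def P_def)
        qed
        have b: "norm (u m n - u m j) \<le> H2 * (Q n - Q j) / Q j"
          unfolding Q_def
        proof (rule osc[OF qpos j(2) less_imp_le[OF H2], of "\<lambda>t. u m t"])
          fix t assume "j < t" "t \<le> n"
          then show "norm (u m t - u m (t - 1)) \<le> H2 * q t / psum q t"
            using D01[of t m] i j k(1) k'(1) by (auto simp: N'_def Q_def)
        qed
        have a2: "(P m - P i) / P i \<le> \<delta>"
        proof -
          have "P (Suc k) \<le> P i" using Pmono i by auto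
          then have "(1 + \<delta>) * P (Suc k) \<le> (1 + \<delta>) * P i" using dpos by (intro mult_left_mono) auto
          then have "P m \<le> (1 + \<delta>) * P i" using k(4) by linarith
          then show ?thesis using Ppos[of i] by (simp add: field_simps)
        qed
        have b2: "(Q n - Q j) / Q j \<le> \<delta>"
        proof -
          have "Q (Suc k') \<le> Q j" using Qmono j by auto
          then have "(1 + \<delta>) * Q (Suc k') \<le> (1 + \<delta>) * Q j" using dpos by (intro mult_left_mono) auto
          then have "Q n \<le> (1 + \<delta>) * Q j" using k'(4) by linarith
          then show ?thesis using Qpos[of j] by (simp add: field_simps)
        qed
        have "H1 * (P m - P i) / P i \<le> H1 * \<delta>" using mult_left_mono[OF a2 less_imp_le[OF H1]] by (simp add: times_divide_eq_right[symmetric] del: times_divide_eq_right)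
        moreover have "H2 * (Q n - Q j) / Q j \<le> H2 * \<delta>" using mult_left_mono[OF b2 less_imp_le[OF H2]] by (simp add: times_divide_eq_right[symmetric] del: times_divide_eq_right)
        moreover have "norm (u m n - u i j) \<le> norm (u m n - u m j) + norm (u m j - u i j)"
          using norm_triangle_ineq[of "u m n - u m j" "u m j - u i j"] by simp
        ultimately show ?thesis using a b by (simp add: algebra_simps)
      qed
      have S1b: "norm S1 \<le> A * ((H1 + H2) * \<delta>)"
      proof -
        have "norm S1 \<le> (\<Sum>i\<in>I. \<Sum>j\<in>J. norm (of_real (p i * q j) * (u m n - u i j)))"
          unfolding S1_def by (rule order_trans[OF norm_sum sum_mono]) (rule norm_sum)
        also have "\<dots> \<le> (\<Sum>i\<in>I. \<Sum>j\<in>J. (p i * q j) * ((H1 + H2) * \<delta>))"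
        proof (intro sum_mono)
          fix i j assume "i \<in> I" "j \<in> J"
          then show "norm (of_real (p i * q j) * (u m n - u i j)) \<le> (p i * q j) * ((H1 + H2) * \<delta>)"
            using pt[of i j] ppos qpos by (simp add: norm_mult abs_of_pos mult_left_mono)
        qed
        also have "\<dots> = A * ((H1 + H2) * \<delta>)" by (simp only: sum_distrib_right[symmetric] sumpq)
        finally show ?thesis .
      qed
      have "A * norm (u m n - l) = norm (S1 + S2)"
        using split[symmetric] Apos by (simp add: norm_mult)
      also have "\<dots> \<le> A * ((H1 + H2) * \<delta>) + \<epsilon> * ((r * r) * A)"
      proof -
        have "\<epsilon> * ((P m + P k) * (Q n + Q k')) \<le> \<epsilon> * ((r * r) * A)"
          using PQr epos by (intro mult_left_mono) auto
        then show ?thesis using S1b S2b norm_triangle_ineq[of S1 S2] by linarith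
      qed
      also have "A * ((H1 + H2) * \<delta>) + \<epsilon> * ((r * r) * A) = A * (e / 4 + e / 4)"
      proof -
        have "\<epsilon> * ((r * r) * A) = A * (\<epsilon> * (r * r))" by (simp add: algebra_simps)
        then show ?thesis by (simp only: dH erc distrib_left)
      qed
      finally have "A * norm (u m n - l) \<le> A * (e / 4 + e / 4)" .
      then have "norm (u m n - l) \<le> e / 2" using Apos by simp
      then show "norm (u m n - l) < e" using e by simp
    qed
  qed
qed

end
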